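(* Let $(X,\le)$ be a partially ordered set. Then a directed completion $(\overline X,\bar\le)$, $\iota:X\to\overline X$ of $X$ exists, and it is unique up to unique isomorphism. Moreover: (i) for every $x\in\overline X$ the set $\iota(X)\cap\downarrow x\subset\overline X$ has a tip, and this tip is $x$; (ii) for every dcpo $(Z,\le_Z)$ and every map $T:X\to Z$ with the Mcp, the unique map $\bar T:\overline X\to Z$ with the Mcp such that $\bar T\circ\iota=T$ is given by $$\bar T(\bar x)=\sup\{T(x):\ x\in X,\ \iota(x)\,\bar\le\,\bar x\}\qquad\forall\bar x\in\overline X,$$ where in particular this supremum exists in $Z$; (iii) an explicit realization is the following: let $Y:=\{A\subset X:\widehat A=A\}$ ordered by inclusion, let $\iota:X\to Y$, $\iota(x):=\downarrow x$, and let $\overline X$ be the directed-sup-closure of $\iota(X)$ computed in $Y$. With this choice, an element $A\in Y$ belongs to $\overline X$ if and only if the set $\{\iota(a):a\in A\}\subset Y$ has a tip in $Y$, and in this case this tip is $A$.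
   Context: Let $(X,\le)$ be a partially ordered set. A subset $D\subset X$ is directed if every finite subset of $D$ (including the empty one) has an upper bound in $D$; in particular directed sets are nonempty. $A\subset X$ is a lower set if $x\in A$ and $y\le x$ imply $y\in A$; $\downarrow A:=\{x\in X:x\le a\text{ for some }a\in A\}$ and $\downarrow a:=\downarrow\{a\}$. $(X,\le)$ is a directed complete partial order (dcpo) if every directed subset has a supremum. A subset $A\subset X$ is directed-sup-closed if the supremum of every directed $D\subset A$ which has a supremum in $X$ belongs to $A$. For $A\subset X$, $\overline A$ is the smallest directed-sup-closed subset of $X$ containing $A$, and $\widehat A$ is the smallest subset of $X$ containing $A$ which is both a lower set and directed-sup-closed. $A$ is dense if $\overline A=X$. $A$ has a tip if $\overline A$ has a maximum; this maximum is denoted ${\sf tip}\,A$. A map $T:X_1\to X_2$ between partially ordered sets has the Monotone Convergence Property (Mcp) if for every directed $D\subset X_1$ having a supremum, $T(D)$ has a supremum and $T(\sup D)=\sup T(D)$. A directed completion of $(X,\le)$ is a dcpo $(\overline X,\bar\le)$ together with a map $\iota:X\to\overline X$ with the Mcp such that for every dcpo $Z$ and every map $T:X\to Z$ with the Mcp there is a unique map $\bar T:\overline X\to Z$ with the Mcp satisfying $\bar T\circ\iota=T$. *)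

theory Defs
  imports Main
begin

definition poset :: "'a set \<Rightarrow> ('a \<Rightarrow> 'a \<Rightarrow> bool) \<Rightarrow> bool" where
  "poset X le \<longleftrightarrow> (\<forall>x\<in>X. le x x)
     \<and> (\<forall>x\<in>X. \<forall>y\<in>X. le x y \<and> le y x \<longrightarrow> x = y)
     \<and> (\<forall>x\<in>X. \<forall>y\<in>X. \<forall>z\<in>X. le x y \<and> le y z \<longrightarrow> le x z)"

text \<open>Directed: every finite subset (including the empty one) has an upper bound in D.\<close>
definition directed :: "'a set \<Rightarrow> ('a \<Rightarrow> 'a \<Rightarrow> bool) \<Rightarrow> 'a set \<Rightarrow> bool" where
  "directed X le D \<longleftrightarrow> D \<subseteq> X \<and>
     (\<forall>F. finite F \<and> F \<subseteq> D \<longrightarrow> (\<exists>u\<in>D. \<forall>f\<in>F. le f u))"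

definition is_sup :: "'a set \<Rightarrow> ('a \<Rightarrow> 'a \<Rightarrow> bool) \<Rightarrow> 'a set \<Rightarrow> 'a \<Rightarrow> bool" where
  "is_sup X le A s \<longleftrightarrow> s \<in> X \<and> (\<forall>a\<in>A. le a s) \<and>
     (\<forall>u\<in>X. (\<forall>a\<in>A. le a u) \<longrightarrow> le s u)"

definition has_sup :: "'a set \<Rightarrow> ('a \<Rightarrow> 'a \<Rightarrow> bool) \<Rightarrow> 'a set \<Rightarrow> bool" where
  "has_sup X le A \<longleftrightarrow> (\<exists>s. is_sup X le A s)"

definition dcpo :: "'a set \<Rightarrow> ('a \<Rightarrow> 'a \<Rightarrow> bool) \<Rightarrow> bool" where
  "dcpo X le \<longleftrightarrow> poset X le \<and> (\<forall>D. directed X le D \<longrightarrow> has_sup X le D)"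

definition lower_set :: "'a set \<Rightarrow> ('a \<Rightarrow> 'a \<Rightarrow> bool) \<Rightarrow> 'a set \<Rightarrow> bool" where
  "lower_set X le A \<longleftrightarrow> A \<subseteq> X \<and> (\<forall>x\<in>A. \<forall>y\<in>X. le y x \<longrightarrow> y \<in> A)"

definition down :: "'a set \<Rightarrow> ('a \<Rightarrow> 'a \<Rightarrow> bool) \<Rightarrow> 'a set \<Rightarrow> 'a set" where
  "down X le A = {x \<in> X. \<exists>a\<in>A. le x a}"

definition dsup_closed :: "'a set \<Rightarrow> ('a \<Rightarrow> 'a \<Rightarrow> bool) \<Rightarrow> 'a set \<Rightarrow> bool" where
  "dsup_closed X le A \<longleftrightarrow> A \<subseteq> X \<and>
     (\<forall>D s. directed X le D \<and> D \<subseteq> A \<and> is_sup X le D s \<longrightarrow> s \<in> A)"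

definition dclosure :: "'a set \<Rightarrow> ('a \<Rightarrow> 'a \<Rightarrow> bool) \<Rightarrow> 'a set \<Rightarrow> 'a set" where
  "dclosure X le A = \<Inter> {B. A \<subseteq> B \<and> dsup_closed X le B}"

text \<open>Smallest lower, directed-sup-closed subset of X containing A (widehat A).\<close>
definition hclosure :: "'a set \<Rightarrow> ('a \<Rightarrow> 'a \<Rightarrow> bool) \<Rightarrow> 'a set \<Rightarrow> 'a set" where
  "hclosure X le A = \<Inter> {B. A \<subseteq> B \<and> lower_set X le B \<and> dsup_closed X le B}"

definition is_tip :: "'a set \<Rightarrow> ('a \<Rightarrow> 'a \<Rightarrow> bool) \<Rightarrow> 'a set \<Rightarrow> 'a \<Rightarrow> bool" where
  "is_tip X le A t \<longleftrightarrow> t \<in> dclosure X le A \<and> (\<forall>y\<in>dclosure X le A. le y t)"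

definition has_tip :: "'a set \<Rightarrow> ('a \<Rightarrow> 'a \<Rightarrow> bool) \<Rightarrow> 'a set \<Rightarrow> bool" where
  "has_tip X le A \<longleftrightarrow> (\<exists>t. is_tip X le A t)"

definition mcp :: "'a set \<Rightarrow> ('a \<Rightarrow> 'a \<Rightarrow> bool) \<Rightarrow> 'b set \<Rightarrow> ('b \<Rightarrow> 'b \<Rightarrow> bool)
    \<Rightarrow> ('a \<Rightarrow> 'b) \<Rightarrow> bool" where
  "mcp X1 le1 X2 le2 T \<longleftrightarrow> (\<forall>x\<in>X1. T x \<in> X2) \<and>
     (\<forall>D s. directed X1 le1 D \<and> is_sup X1 le1 D s \<longrightarrow> is_sup X2 le2 (T ` D) (T s))"

text \<open>Directed completion, with the universal property required for all dcpos
whose carrier lives in the type 'z (HOL cannot quantify over types inside a formula).\<close>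
definition dcompl :: "'z itself \<Rightarrow> 'a set \<Rightarrow> ('a \<Rightarrow> 'a \<Rightarrow> bool)
    \<Rightarrow> 'b set \<Rightarrow> ('b \<Rightarrow> 'b \<Rightarrow> bool) \<Rightarrow> ('a \<Rightarrow> 'b) \<Rightarrow> bool" where
  "dcompl (_::'z itself) X le Xb leb \<iota> \<longleftrightarrow> dcpo Xb leb \<and> mcp X le Xb leb \<iota> \<and>
     (\<forall>(Z::'z set) leZ T. dcpo Z leZ \<and> mcp X le Z leZ T \<longrightarrow>
        (\<exists>Tb. mcp Xb leb Z leZ Tb \<and> (\<forall>x\<in>X. Tb (\<iota> x) = T x) \<and>
           (\<forall>Tb'. mcp Xb leb Z leZ Tb' \<and> (\<forall>x\<in>X. Tb' (\<iota> x) = T x)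
                 \<longrightarrow> (\<forall>y\<in>Xb. Tb' y = Tb y))))"

definition order_iso :: "'a set \<Rightarrow> ('a \<Rightarrow> 'a \<Rightarrow> bool) \<Rightarrow> 'b set \<Rightarrow> ('b \<Rightarrow> 'b \<Rightarrow> bool)
    \<Rightarrow> ('a \<Rightarrow> 'b) \<Rightarrow> bool" where
  "order_iso X1 le1 X2 le2 f \<longleftrightarrow> bij_betw f X1 X2 \<and>
     (\<forall>x\<in>X1. \<forall>y\<in>X1. le1 x y \<longleftrightarrow> le2 (f x) (f y))"

definition realY :: "'a set \<Rightarrow> ('a \<Rightarrow> 'a \<Rightarrow> bool) \<Rightarrow> 'a set set" where
  "realY X le = {A. A \<subseteq> X \<and> hclosure X le A = A}"

definition real_iota :: "'a set \<Rightarrow> ('a \<Rightarrow> 'a \<Rightarrow> bool) \<Rightarrow> 'a \<Rightarrow> 'a set" where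
  "real_iota X le x = down X le {x}"

definition realXb :: "'a set \<Rightarrow> ('a \<Rightarrow> 'a \<Rightarrow> bool) \<Rightarrow> 'a set set" where
  "realXb X le = dclosure (realY X le) (\<subseteq>) (real_iota X le ` X)"

end

theory Submission
  imports Defs
begin


lemma dcl_sub: "A \<subseteq> dclosure P le A"
  unfolding dclosure_def by blast

lemma dcl_least: "A \<subseteq> B \<Longrightarrow> dsup_closed P le B \<Longrightarrow> dclosure P le A \<subseteq> B"
  unfolding dclosure_def by blast

lemma dsup_closed_top: "dsup_closed P le P"
  unfolding dsup_closed_def is_sup_def by blast

lemma dcl_subP: "A \<subseteq> P \<Longrightarrow> dclosure P le A \<subseteq> P"
  by (rule dcl_least[OF _ dsup_closed_top])

lemma dcl_closed: assumes "A \<subseteq> P" shows "dsup_closed P le (dclosure P le A)"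
  unfolding dsup_closed_def
proof (intro conjI allI impI)
  show "dclosure P le A \<subseteq> P" using dcl_subP[OF assms] .
next
  fix D s assume h: "directed P le D \<and> D \<subseteq> dclosure P le A \<and> is_sup P le D s"
  show "s \<in> dclosure P le A" unfolding dclosure_def
  proof
    fix B assume "B \<in> {B. A \<subseteq> B \<and> dsup_closed P le B}"
    hence "D \<subseteq> B" "dsup_closed P le B" using h unfolding dclosure_def by blast+
    thus "s \<in> B" using h unfolding dsup_closed_def by blast
  qed
qed

lemma dcl_mono: "A \<subseteq> B \<Longrightarrow> B \<subseteq> P \<Longrightarrow> dclosure P le A \<subseteq> dclosure P le B"
  by (meson dcl_closed dcl_least dcl_sub order_trans)

lemma dcl_induct:
  assumes "A \<subseteq> P" "\<And>a. a \<in> A \<Longrightarrow> Q a"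
    "\<And>D s. directed P le D \<Longrightarrow> D \<subseteq> dclosure P le A \<Longrightarrow> (\<forall>d\<in>D. Q d) \<Longrightarrow> is_sup P le D s \<Longrightarrow> Q s"
    "x \<in> dclosure P le A"
  shows "Q x"
proof -
  let ?B = "{x \<in> dclosure P le A. Q x}"
  have "dsup_closed P le ?B"
    unfolding dsup_closed_def
  proof (intro conjI allI impI)
    show "?B \<subseteq> P" using dcl_subP[OF assms(1)] by blast
  next
    fix D s assume h: "directed P le D \<and> D \<subseteq> ?B \<and> is_sup P le D s"
    have "s \<in> dclosure P le A" using dcl_closed[OF assms(1), of le] h unfolding dsup_closed_def by blast
    moreover have "Q s" using assms(3)[of D s] h by blast
    ultimately show "s \<in> ?B" by blast
  qed
  moreover have "A \<subseteq> ?B" using dcl_sub[of A P le] assms(2) by blast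
  ultimately have "dclosure P le A \<subseteq> ?B" by (rule dcl_least[rotated])
  thus ?thesis using assms(4) by blast
qed

lemma hcl_sub: "A \<subseteq> hclosure P le A" unfolding hclosure_def by blast
lemma hcl_least: "A \<subseteq> B \<Longrightarrow> lower_set P le B \<Longrightarrow> dsup_closed P le B \<Longrightarrow> hclosure P le A \<subseteq> B"
  unfolding hclosure_def by blast
lemma lower_top: "lower_set P le P" unfolding lower_set_def by blast
lemma hcl_subP: "A \<subseteq> P \<Longrightarrow> hclosure P le A \<subseteq> P" using hcl_least[OF _ lower_top dsup_closed_top] .

lemma hcl_lower: assumes "A \<subseteq> P" shows "lower_set P le (hclosure P le A)"
proof -
  have "hclosure P le A \<subseteq> P" using hcl_subP[OF assms] .
  moreover have "\<forall>x\<in>hclosure P le A. \<forall>y\<in>P. le y x \<longrightarrow> y \<in> hclosure P le A"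
    unfolding hclosure_def lower_set_def by blast
  ultimately show ?thesis unfolding lower_set_def by blast
qed

lemma hcl_dsup: assumes "A \<subseteq> P" shows "dsup_closed P le (hclosure P le A)"
  unfolding dsup_closed_def
proof (intro conjI allI impI)
  show "hclosure P le A \<subseteq> P" using hcl_subP[OF assms] .
next
  fix D s assume h: "directed P le D \<and> D \<subseteq> hclosure P le A \<and> is_sup P le D s"
  show "s \<in> hclosure P le A" unfolding hclosure_def
  proof
    fix B assume "B \<in> {B. A \<subseteq> B \<and> lower_set P le B \<and> dsup_closed P le B}"
    hence "D \<subseteq> B" "dsup_closed P le B" using h unfolding hclosure_def by blast+
    thus "s \<in> B" using h unfolding dsup_closed_def by blast
  qed
qed

lemma realY_iff: "A \<in> realY X le \<longleftrightarrow> lower_set X le A \<and> dsup_closed X le A"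
proof
  assume "A \<in> realY X le"
  hence "A \<subseteq> X" "hclosure X le A = A" unfolding realY_def by auto
  thus "lower_set X le A \<and> dsup_closed X le A" using hcl_lower hcl_dsup by metis
next
  assume h: "lower_set X le A \<and> dsup_closed X le A"
  hence "A \<subseteq> X" unfolding lower_set_def by blast
  moreover have "hclosure X le A = A" using hcl_least[of A A X le] hcl_sub[of A X le] h by blast
  ultimately show "A \<in> realY X le" unfolding realY_def by blast
qed

lemma poset_refl: "poset P le \<Longrightarrow> x \<in> P \<Longrightarrow> le x x"
  unfolding poset_def by (elim conjE) metis
lemma poset_antisym: "poset P le \<Longrightarrow> x \<in> P \<Longrightarrow> y \<in> P \<Longrightarrow> le x y \<Longrightarrow> le y x \<Longrightarrow> x = y"
  unfolding poset_def by (elim conjE) metis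
lemma poset_trans: "poset P le \<Longrightarrow> x \<in> P \<Longrightarrow> y \<in> P \<Longrightarrow> z \<in> P \<Longrightarrow> le x y \<Longrightarrow> le y z \<Longrightarrow> le x z"
  unfolding poset_def by (elim conjE) metis

lemma sup_unique: "poset P le \<Longrightarrow> is_sup P le D s \<Longrightarrow> is_sup P le D t \<Longrightarrow> s = t"
  unfolding is_sup_def by (metis poset_antisym)

lemma pair_dir: assumes "poset P le" "x \<in> P" "y \<in> P" "le x y"
  shows "directed P le {x,y}" "is_sup P le {x,y} y"
proof -
  have yy: "le y y" using poset_refl assms(1,3) by metis
  show "directed P le {x,y}" unfolding directed_def
  proof (intro conjI allI impI)
    show "{x, y} \<subseteq> P" using assms by blast
  next
    fix F assume "finite F \<and> F \<subseteq> {x, y}"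
    hence "\<forall>f\<in>F. le f y" using yy assms(4) by blast
    thus "\<exists>u\<in>{x, y}. \<forall>f\<in>F. le f u" by blast
  qed
  show "is_sup P le {x,y} y" unfolding is_sup_def using yy assms(3,4) by blast
qed

lemma mcp_mono: assumes "poset X1 le1" "mcp X1 le1 X2 le2 f" "x \<in> X1" "y \<in> X1" "le1 x y"
  shows "le2 (f x) (f y)"
proof -
  have "is_sup X2 le2 (f ` {x,y}) (f y)" using assms pair_dir[OF assms(1,3,4,5)] unfolding mcp_def by blast
  thus ?thesis unfolding is_sup_def by blast
qed

lemma directed_image:
  assumes "directed X1 le1 D" "\<forall>x\<in>X1. f x \<in> X2"
    "\<And>x y. x \<in> D \<Longrightarrow> y \<in> D \<Longrightarrow> le1 x y \<Longrightarrow> le2 (f x) (f y)"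
  shows "directed X2 le2 (f ` D)"
  unfolding directed_def
proof (intro conjI allI impI)
  show "f ` D \<subseteq> X2" using assms(1,2) unfolding directed_def by blast
next
  fix F assume F: "finite F \<and> F \<subseteq> f ` D"
  then obtain G where G: "G \<subseteq> D" "finite G" "F = f ` G" using finite_subset_image by metis
  then obtain u where u: "u \<in> D" "\<forall>g\<in>G. le1 g u" using assms(1) unfolding directed_def by blast
  show "\<exists>v\<in>f ` D. \<forall>w\<in>F. le2 w v" using G u assms(3) by blast
qed

lemma mcp_comp: assumes "poset X1 le1" "mcp X1 le1 X2 le2 f" "mcp X2 le2 X3 le3 g"
  shows "mcp X1 le1 X3 le3 (g \<circ> f)"
  unfolding mcp_def
proof (intro conjI allI impI ballI)
  fix x assume "x \<in> X1" thus "(g \<circ> f) x \<in> X3" using assms(2,3) unfolding mcp_def by auto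
next
  fix D s assume h: "directed X1 le1 D \<and> is_sup X1 le1 D s"
  have "directed X2 le2 (f ` D)"
    apply (rule directed_image[OF conjunct1[OF h]])
    using assms(2) unfolding mcp_def apply blast
    using mcp_mono[OF assms(1,2)] h unfolding directed_def by blast
  moreover have "is_sup X2 le2 (f ` D) (f s)" using h assms(2) unfolding mcp_def by blast
  ultimately have "is_sup X3 le3 (g ` f ` D) (g (f s))" using assms(3) unfolding mcp_def by blast
  thus "is_sup X3 le3 ((g \<circ> f) ` D) ((g \<circ> f) s)" by (simp add: image_comp)
qed

lemma mcp_id: "mcp X le X le (\<lambda>y. y)"
  unfolding mcp_def directed_def by auto

lemma iso_mcp: assumes "order_iso X1 le1 X2 le2 f" shows "mcp X1 le1 X2 le2 f"
proof -
  have b: "bij_betw f X1 X2" using assms unfolding order_iso_def by (elim conjE)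
  have o: "\<And>x y. x\<in>X1 \<Longrightarrow> y\<in>X1 \<Longrightarrow> le1 x y \<longleftrightarrow> le2 (f x) (f y)"
    using assms unfolding order_iso_def by blast
  have im: "f ` X1 = X2" using b by (simp add: bij_betw_def)
  show ?thesis unfolding mcp_def
  proof (intro conjI allI impI ballI)
    fix x assume "x \<in> X1" thus "f x \<in> X2" using im by blast
  next
    fix D s assume h: "directed X1 le1 D \<and> is_sup X1 le1 D s"
    hence D: "D \<subseteq> X1" "s \<in> X1" "\<And>d. d\<in>D \<Longrightarrow> le1 d s"
      "\<And>u. u\<in>X1 \<Longrightarrow> (\<forall>d\<in>D. le1 d u) \<Longrightarrow> le1 s u"
      unfolding directed_def is_sup_def by auto
    show "is_sup X2 le2 (f ` D) (f s)" unfolding is_sup_def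
    proof (intro conjI ballI impI)
      show "f s \<in> X2" using im D(2) by blast
    next
      fix a assume "a \<in> f ` D"
      then obtain d where d: "d \<in> D" "a = f d" by blast
      have "le1 d s" using D(3) d(1) .
      thus "le2 a (f s)" using o[of d s] D(1,2) d by auto
    next
      fix u assume u: "u \<in> X2" "\<forall>a\<in>f ` D. le2 a u"
      then obtain v where v: "v \<in> X1" "u = f v" using im by blast
      have "\<forall>d\<in>D. le1 d v"
      proof
        fix d assume d: "d \<in> D"
        have "le2 (f d) u" using u(2) d by blast
        thus "le1 d v" using o[of d v] v D(1) d by auto
      qed
      hence "le1 s v" using D(4) v(1) by blast
      thus "le2 (f s) u" using o[of s v] D(2) v by auto
    qed
  qed
qed

lemma sup_in_sub: "is_sup P le D s \<Longrightarrow> s \<in> B \<Longrightarrow> B \<subseteq> P \<Longrightarrow> is_sup B le D s"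
  unfolding is_sup_def by blast

lemma dir_mono: "directed P le D \<Longrightarrow> D \<subseteq> B \<Longrightarrow> directed B le D"
  unfolding directed_def by blast
lemma dir_mono2: "directed B le D \<Longrightarrow> B \<subseteq> P \<Longrightarrow> directed P le D"
  unfolding directed_def by blast

lemma poset_sub: "poset P le \<Longrightarrow> B \<subseteq> P \<Longrightarrow> poset B le"
  unfolding poset_def by (elim conjE) (meson subsetD)

lemma dcpo_sub2: assumes "dcpo P le" "dsup_closed P le B" "directed B le D" "is_sup B le D s"
  shows "is_sup P le D s"
proof -
  have BP: "B \<subseteq> P" using assms(2) unfolding dsup_closed_def by blast
  have dP: "directed P le D" using dir_mono2[OF assms(3) BP] .
  then obtain t where t: "is_sup P le D t" using assms(1) unfolding dcpo_def has_sup_def by blast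
  have DB: "D \<subseteq> B" using assms(3) unfolding directed_def by blast
  have "t \<in> B" using assms(2) dP DB t unfolding dsup_closed_def by blast
  hence "is_sup B le D t" using sup_in_sub[OF t _ BP] by blast
  moreover have "poset B le" using poset_sub BP assms(1) unfolding dcpo_def by blast
  ultimately have "s = t" using sup_unique assms(4) by metis
  thus ?thesis using t by simp
qed

lemma dcpo_sub1: assumes "dcpo P le" "dsup_closed P le B" shows "dcpo B le"
proof -
  have BP: "B \<subseteq> P" using assms(2) unfolding dsup_closed_def by blast
  have "poset B le" using poset_sub BP assms(1) unfolding dcpo_def by blast
  moreover have "has_sup B le D" if d: "directed B le D" for D
  proof -
    have dP: "directed P le D" using dir_mono2[OF d BP] .
    then obtain t where t: "is_sup P le D t" using assms(1) unfolding dcpo_def has_sup_def by blast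
    have DB: "D \<subseteq> B" using d unfolding directed_def by blast
    have "t \<in> B" using assms(2) dP DB t unfolding dsup_closed_def by blast
    thus ?thesis using sup_in_sub[OF t _ BP] unfolding has_sup_def by blast
  qed
  ultimately show ?thesis unfolding dcpo_def by blast
qed

lemma dcomplD:
  fixes Z :: "'z set"
  assumes "dcompl TYPE('z) X le Xb leb \<iota>" "dcpo Z leZ" "mcp X le Z leZ T"
  obtains Tb where "mcp Xb leb Z leZ Tb" "\<forall>x\<in>X. Tb (\<iota> x) = T x"
    "\<And>Tb'. mcp Xb leb Z leZ Tb' \<Longrightarrow> \<forall>x\<in>X. Tb' (\<iota> x) = T x \<Longrightarrow> \<forall>y\<in>Xb. Tb' y = Tb y"
proof -
  have "\<forall>(Z::'z set) leZ T. dcpo Z leZ \<and> mcp X le Z leZ T \<longrightarrow>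
        (\<exists>Tb. mcp Xb leb Z leZ Tb \<and> (\<forall>x\<in>X. Tb (\<iota> x) = T x) \<and>
           (\<forall>Tb'. mcp Xb leb Z leZ Tb' \<and> (\<forall>x\<in>X. Tb' (\<iota> x) = T x)
                 \<longrightarrow> (\<forall>y\<in>Xb. Tb' y = Tb y)))"
    using assms(1) unfolding dcompl_def by (elim conjE)
  hence "\<exists>Tb. mcp Xb leb Z leZ Tb \<and> (\<forall>x\<in>X. Tb (\<iota> x) = T x) \<and>
           (\<forall>Tb'. mcp Xb leb Z leZ Tb' \<and> (\<forall>x\<in>X. Tb' (\<iota> x) = T x)
                 \<longrightarrow> (\<forall>y\<in>Xb. Tb' y = Tb y))"
    using assms(2,3) by blast
  then obtain Tb where "mcp Xb leb Z leZ Tb" "\<forall>x\<in>X. Tb (\<iota> x) = T x"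
    "\<forall>Tb'. mcp Xb leb Z leZ Tb' \<and> (\<forall>x\<in>X. Tb' (\<iota> x) = T x)
                 \<longrightarrow> (\<forall>y\<in>Xb. Tb' y = Tb y)" by blast
  thus ?thesis using that by blast
qed

lemma dcomplD2: "dcompl TYPE('z) X le Xb leb \<iota> \<Longrightarrow> dcpo Xb leb \<and> mcp X le Xb leb \<iota>"
  unfolding dcompl_def by blast




lemma dcomplEx:
  fixes Z :: "'z set"
  assumes "dcompl TYPE('z) X le Xb leb \<iota>" "dcpo Z leZ" "mcp X le Z leZ T"
  shows "\<exists>Tb. mcp Xb leb Z leZ Tb \<and> (\<forall>x\<in>X. Tb (\<iota> x) = T x) \<and>
           (\<forall>Tb'. mcp Xb leb Z leZ Tb' \<and> (\<forall>x\<in>X. Tb' (\<iota> x) = T x)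
                 \<longrightarrow> (\<forall>y\<in>Xb. Tb' y = Tb y))"
proof -
  have "\<forall>(Z::'z set) leZ T. dcpo Z leZ \<and> mcp X le Z leZ T \<longrightarrow>
        (\<exists>Tb. mcp Xb leb Z leZ Tb \<and> (\<forall>x\<in>X. Tb (\<iota> x) = T x) \<and>
           (\<forall>Tb'. mcp Xb leb Z leZ Tb' \<and> (\<forall>x\<in>X. Tb' (\<iota> x) = T x)
                 \<longrightarrow> (\<forall>y\<in>Xb. Tb' y = Tb y)))"
    using assms(1) unfolding dcompl_def by (elim conjE)
  thus ?thesis using assms(2,3) by (elim allE impE) (rule conjI)
qed

lemma mcpD1: "mcp X1 le1 X2 le2 f \<Longrightarrow> x \<in> X1 \<Longrightarrow> f x \<in> X2"
  unfolding mcp_def by blast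
lemma mcpD2: "mcp X1 le1 X2 le2 f \<Longrightarrow> directed X1 le1 D \<Longrightarrow> is_sup X1 le1 D s \<Longrightarrow> is_sup X2 le2 (f ` D) (f s)"
  unfolding mcp_def by blast
lemma mcpI: "(\<And>x. x \<in> X1 \<Longrightarrow> f x \<in> X2) \<Longrightarrow> (\<And>D s. directed X1 le1 D \<Longrightarrow> is_sup X1 le1 D s \<Longrightarrow> is_sup X2 le2 (f ` D) (f s))
  \<Longrightarrow> mcp X1 le1 X2 le2 f"
  unfolding mcp_def by blast
lemma is_supD: "is_sup P le D s \<Longrightarrow> s \<in> P"
  "is_sup P le D s \<Longrightarrow> d \<in> D \<Longrightarrow> le d s"
  "is_sup P le D s \<Longrightarrow> u \<in> P \<Longrightarrow> (\<And>d. d \<in> D \<Longrightarrow> le d u) \<Longrightarrow> le s u"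
  unfolding is_sup_def by blast+
lemma directedD: "directed P le D \<Longrightarrow> D \<subseteq> P" unfolding directed_def by blast

lemma density:
  fixes Xb :: "'d set"
  assumes "poset X le" "dcompl TYPE('d) X le Xb leb \<iota>"
  shows "dclosure Xb leb (\<iota> ` X) = Xb"
proof -
  have dc: "dcpo Xb leb" and mi: "mcp X le Xb leb \<iota>" using dcomplD2[OF assms(2)] by auto
  let ?B = "dclosure Xb leb (\<iota> ` X)"
  have iX: "\<iota> ` X \<subseteq> Xb" using mcpD1[OF mi] by blast
  have Bc: "dsup_closed Xb leb ?B" by (rule dcl_closed[OF iX])
  have BX: "?B \<subseteq> Xb" by (rule dcl_subP[OF iX])
  have dB: "dcpo ?B leb" using dcpo_sub1[OF dc Bc] .
  have iB: "\<iota> x \<in> ?B" if "x \<in> X" for x using dcl_sub[of "\<iota> ` X" Xb leb] that by blast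
  have mB: "mcp X le ?B leb \<iota>"
  proof (rule mcpI)
    fix x assume "x \<in> X" thus "\<iota> x \<in> ?B" by (rule iB)
  next
    fix D s assume h: "directed X le D" "is_sup X le D s"
    have 1: "is_sup Xb leb (\<iota> ` D) (\<iota> s)" using mcpD2[OF mi h] .
    have "s \<in> X" using is_supD(1)[OF h(2)] .
    hence 2: "\<iota> s \<in> ?B" by (rule iB)
    show "is_sup ?B leb (\<iota> ` D) (\<iota> s)" by (rule sup_in_sub[OF 1 2 BX])
  qed
  from dcomplEx[OF assms(2) dB mB] obtain T' where T'0: "mcp Xb leb ?B leb T' \<and> (\<forall>x\<in>X. T' (\<iota> x) = \<iota> x) \<and>
           (\<forall>Tb'. mcp Xb leb ?B leb Tb' \<and> (\<forall>x\<in>X. Tb' (\<iota> x) = \<iota> x)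
                 \<longrightarrow> (\<forall>y\<in>Xb. Tb' y = T' y))" ..
  have T': "mcp Xb leb ?B leb T'" "\<forall>x\<in>X. T' (\<iota> x) = \<iota> x" using conjunct1[OF T'0] conjunct1[OF conjunct2[OF T'0]] by - assumption+
  have inc: "mcp ?B leb Xb leb (\<lambda>y. y)"
  proof (rule mcpI)
    fix x assume "x \<in> ?B" thus "x \<in> Xb" using BX by blast
  next
    fix D s assume h: "directed ?B leb D" "is_sup ?B leb D s"
    have "is_sup Xb leb D s" by (rule dcpo_sub2[OF dc Bc h])
    thus "is_sup Xb leb ((\<lambda>y. y) ` D) s" by simp
  qed
  have pX: "poset Xb leb" using dc unfolding dcpo_def by (elim conjE)
  have m1: "mcp Xb leb Xb leb ((\<lambda>y. y) \<circ> T')" using mcp_comp[OF pX T'(1) inc] .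
  from dcomplEx[OF assms(2) dc mi] obtain Tb where Tb0: "mcp Xb leb Xb leb Tb \<and> (\<forall>x\<in>X. Tb (\<iota> x) = \<iota> x) \<and>
           (\<forall>Tb'. mcp Xb leb Xb leb Tb' \<and> (\<forall>x\<in>X. Tb' (\<iota> x) = \<iota> x)
                 \<longrightarrow> (\<forall>y\<in>Xb. Tb' y = Tb y))" ..
  have TbU: "\<forall>Tb'. mcp Xb leb Xb leb Tb' \<and> (\<forall>x\<in>X. Tb' (\<iota> x) = \<iota> x)
                 \<longrightarrow> (\<forall>y\<in>Xb. Tb' y = Tb y)"
    using conjunct2[OF conjunct2[OF Tb0]] .
  have Tb: "\<And>Tb'. mcp Xb leb Xb leb Tb' \<Longrightarrow> \<forall>x\<in>X. Tb' (\<iota> x) = \<iota> x \<Longrightarrow> \<forall>y\<in>Xb. Tb' y = Tb y"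
    using TbU by blast
  have "\<forall>x\<in>X. ((\<lambda>y. y) \<circ> T') (\<iota> x) = \<iota> x" using T'(2) by simp
  hence e1: "\<forall>y\<in>Xb. ((\<lambda>y. y) \<circ> T') y = Tb y" by (rule Tb[OF m1])
  have "\<forall>x\<in>X. (\<lambda>y. y) (\<iota> x) = \<iota> x" by simp
  hence e2: "\<forall>y\<in>Xb. (\<lambda>y. y) y = Tb y" by (rule Tb[OF mcp_id])
  have "Xb \<subseteq> ?B"
  proof
    fix y assume y: "y \<in> Xb"
    hence "T' y \<in> ?B" using mcpD1[OF T'(1)] by blast
    moreover have "T' y = y"
    proof -
      have a: "((\<lambda>y. y) \<circ> T') y = Tb y" using bspec[OF e1 y] .
      have b: "(\<lambda>y. y) y = Tb y" using bspec[OF e2 y] .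
      from a b show ?thesis by (metis comp_apply)
    qed
    ultimately show "y \<in> ?B" by simp
  qed
  thus ?thesis using BX by blast
qed

lemma down_dsup: assumes "poset P le" "t \<in> P" shows "dsup_closed P le (down P le {t})"
  using assms unfolding dsup_closed_def down_def is_sup_def by blast

lemma is_tip_of: assumes "poset P le" "S \<subseteq> down P le {t}" "t \<in> dclosure P le S" "t \<in> P"
  shows "is_tip P le S t"
proof -
  have "dclosure P le S \<subseteq> down P le {t}" using dcl_least[OF assms(2) down_dsup[OF assms(1,4)]] .
  thus ?thesis using assms(3) unfolding is_tip_def down_def by blast
qed

lemma dsup_closedD: "dsup_closed P le B \<Longrightarrow> directed P le D \<Longrightarrow> D \<subseteq> B \<Longrightarrow> is_sup P le D s \<Longrightarrow> s \<in> B"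
  unfolding dsup_closed_def by blast

lemma down_iff: "y \<in> down P le {x} \<longleftrightarrow> y \<in> P \<and> le y x"
  unfolding down_def by simp

lemma tip_lemma:
  fixes Xb :: "'d set"
  assumes "poset X le" "dcompl TYPE('d) X le Xb leb \<iota>" "x \<in> Xb"
  shows "is_tip Xb leb (\<iota> ` X \<inter> down Xb leb {x}) x"
proof -
  have dc: "dcpo Xb leb" and mi: "mcp X le Xb leb \<iota>" using dcomplD2[OF assms(2)] by auto
  have pX: "poset Xb leb" using dc unfolding dcpo_def by (elim conjE)
  have iX: "\<iota> ` X \<subseteq> Xb" using mcpD1[OF mi] by blast
  let ?S = "\<lambda>x. \<iota> ` X \<inter> down Xb leb {x}"
  have SX: "?S x \<subseteq> Xb" for x unfolding down_def by blast
  have Smono: "?S a \<subseteq> ?S b" if ab: "a \<in> Xb" "b \<in> Xb" "leb a b" for a b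
  proof
    fix y assume "y \<in> ?S a"
    hence y: "y \<in> \<iota> ` X" "y \<in> Xb" "leb y a" by (auto simp: down_iff)
    have "leb y b" by (rule poset_trans[OF pX y(2) ab(1) ab(2) y(3) ab(3)])
    thus "y \<in> ?S b" using y by (auto simp: down_iff)
  qed
  have "x \<in> dclosure Xb leb (?S x)"
  proof (rule dcl_induct[OF iX, where Q = "\<lambda>x. x \<in> dclosure Xb leb (?S x)"])
    fix a assume a: "a \<in> \<iota> ` X"
    hence aX: "a \<in> Xb" using iX by blast
    have "leb a a" by (rule poset_refl[OF pX aX])
    hence "a \<in> ?S a" using a aX by (auto simp: down_iff)
    thus "a \<in> dclosure Xb leb (?S a)" using dcl_sub[of "?S a" Xb leb] by blast
  next
    fix D s assume h: "directed Xb leb D" "D \<subseteq> dclosure Xb leb (\<iota> ` X)"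
      "\<forall>d\<in>D. d \<in> dclosure Xb leb (?S d)" "is_sup Xb leb D s"
    have DX: "D \<subseteq> Xb" using directedD[OF h(1)] .
    have sX: "s \<in> Xb" using is_supD(1)[OF h(4)] .
    have "D \<subseteq> dclosure Xb leb (?S s)"
    proof
      fix d assume d: "d \<in> D"
      have "leb d s" using is_supD(2)[OF h(4) d] .
      hence "?S d \<subseteq> ?S s" using Smono[of d s] DX d sX by blast
      hence "dclosure Xb leb (?S d) \<subseteq> dclosure Xb leb (?S s)" by (rule dcl_mono[OF _ SX])
      thus "d \<in> dclosure Xb leb (?S s)" using h(3) d by blast
    qed
    thus "s \<in> dclosure Xb leb (?S s)" by (rule dsup_closedD[OF dcl_closed[OF SX[of s]] h(1) _ h(4)])
  next
    show "x \<in> dclosure Xb leb (\<iota> ` X)" using density[OF assms(1,2)] assms(3) by simp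
  qed
  thus ?thesis by (rule is_tip_of[OF pX Int_lower2 _ assms(3)])
qed

lemma mcp_tip:
  assumes "poset P le" "poset Z leZ" "mcp P le Z leZ f" "is_tip P le S t" "S \<subseteq> P"
  shows "is_sup Z leZ (f ` S) (f t)"
proof -
  have tc: "t \<in> dclosure P le S" "\<And>y. y\<in>dclosure P le S \<Longrightarrow> le y t"
    using assms(4) unfolding is_tip_def by auto
  have tP: "t \<in> P" using tc(1) dcl_subP[OF assms(5)] by blast
  show ?thesis unfolding is_sup_def
  proof (intro conjI ballI impI)
    show "f t \<in> Z" by (rule mcpD1[OF assms(3) tP])
  next
    fix a assume "a \<in> f ` S"
    then obtain s where s: "s \<in> S" "a = f s" by blast
    have sP: "s \<in> P" using s(1) assms(5) by blast
    have "le s t" using tc(2) s(1) dcl_sub[of S P le] by blast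
    hence "leZ (f s) (f t)" by (rule mcp_mono[OF assms(1,3) sP tP])
    thus "leZ a (f t)" using s(2) by simp
  next
    fix u assume u: "u \<in> Z" "\<forall>a\<in>f ` S. leZ a u"
    let ?N = "{y \<in> P. leZ (f y) u}"
    have "dsup_closed P le ?N" unfolding dsup_closed_def
    proof (intro conjI allI impI)
      show "?N \<subseteq> P" by blast
    next
      fix D s assume h: "directed P le D \<and> D \<subseteq> ?N \<and> is_sup P le D s"
      have h1: "directed P le D" and h2: "D \<subseteq> ?N" and h3: "is_sup P le D s" using h by auto
      have hs: "is_sup Z leZ (f ` D) (f s)" by (rule mcpD2[OF assms(3) h1 h3])
      have "leZ (f s) u"
      proof (rule is_supD(3)[OF hs u(1)])
        fix d assume "d \<in> f ` D"
        then obtain e where e: "e \<in> D" "d = f e" by blast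
        have "e \<in> ?N" using h2 e(1) by (rule subsetD)
        thus "leZ d u" using e(2) by simp
      qed
      moreover have "s \<in> P" by (rule is_supD(1)[OF h3])
      ultimately show "s \<in> ?N" by blast
    qed
    moreover have "S \<subseteq> ?N" using u assms(5) by blast
    ultimately have "dclosure P le S \<subseteq> ?N" using dcl_least by blast
    thus "leZ (f t) u" using tc(1) by blast
  qed
qed

lemma part_ii:
  fixes Xb :: "'d set" and Z :: "'z set"
  assumes "poset X le" "dcompl TYPE('d) X le Xb leb \<iota>" "dcompl TYPE('z) X le Xb leb \<iota>"
    "dcpo Z leZ" "mcp X le Z leZ T"
  shows "(\<forall>xb\<in>Xb. has_sup Z leZ {T x | x. x \<in> X \<and> leb (\<iota> x) xb})
        \<and> (\<forall>Tb. mcp Xb leb Z leZ Tb \<and> (\<forall>x\<in>X. Tb (\<iota> x) = T x)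
              \<longrightarrow> (\<forall>xb\<in>Xb. is_sup Z leZ {T x | x. x \<in> X \<and> leb (\<iota> x) xb} (Tb xb)))"
proof -
  have dc: "dcpo Xb leb" and mi: "mcp X le Xb leb \<iota>" using dcomplD2[OF assms(2)] by auto
  have pX: "poset Xb leb" using dc unfolding dcpo_def by (elim conjE)
  have pZ: "poset Z leZ" using assms(4) unfolding dcpo_def by (elim conjE)
  have iX: "\<And>x. x\<in>X \<Longrightarrow> \<iota> x \<in> Xb" using mcpD1[OF mi] by blast
  have key: "is_sup Z leZ {T x | x. x \<in> X \<and> leb (\<iota> x) xb} (Tb xb)"
    if Tb: "mcp Xb leb Z leZ Tb" "\<forall>x\<in>X. Tb (\<iota> x) = T x" and xb: "xb \<in> Xb" for Tb xb
  proof -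
    have eq: "{T x | x. x \<in> X \<and> leb (\<iota> x) xb} = Tb ` (\<iota> ` X \<inter> down Xb leb {xb})"
    proof
      show "{T x | x. x \<in> X \<and> leb (\<iota> x) xb} \<subseteq> Tb ` (\<iota> ` X \<inter> down Xb leb {xb})"
      proof
        fix z assume "z \<in> {T x | x. x \<in> X \<and> leb (\<iota> x) xb}"
        then obtain x where x: "x \<in> X" "leb (\<iota> x) xb" "z = T x" by blast
        have "\<iota> x \<in> \<iota> ` X \<inter> down Xb leb {xb}" using x iX[of x] by (auto simp: down_iff)
        moreover have "z = Tb (\<iota> x)" using x Tb(2) by simp
        ultimately show "z \<in> Tb ` (\<iota> ` X \<inter> down Xb leb {xb})" by blast
      qed
    next
      show "Tb ` (\<iota> ` X \<inter> down Xb leb {xb}) \<subseteq> {T x | x. x \<in> X \<and> leb (\<iota> x) xb}"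
      proof
        fix z assume "z \<in> Tb ` (\<iota> ` X \<inter> down Xb leb {xb})"
        then obtain x where x: "x \<in> X" "\<iota> x \<in> down Xb leb {xb}" "z = Tb (\<iota> x)" by blast
        have "leb (\<iota> x) xb" using x(2) by (simp add: down_iff)
        moreover have "z = T x" using x Tb(2) by simp
        ultimately show "z \<in> {T x | x. x \<in> X \<and> leb (\<iota> x) xb}" using x(1) by blast
      qed
    qed
    have SX: "\<iota> ` X \<inter> down Xb leb {xb} \<subseteq> Xb" by (auto simp: down_iff)
    have "is_sup Z leZ (Tb ` (\<iota> ` X \<inter> down Xb leb {xb})) (Tb xb)"
      by (rule mcp_tip[OF pX pZ Tb(1) tip_lemma[OF assms(1,2) xb] SX])
    thus ?thesis using eq by simp
  qed
  from dcomplEx[OF assms(3,4,5)] obtain Tb where Tb0: "mcp Xb leb Z leZ Tb \<and> (\<forall>x\<in>X. Tb (\<iota> x) = T x) \<and>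
           (\<forall>Tb'. mcp Xb leb Z leZ Tb' \<and> (\<forall>x\<in>X. Tb' (\<iota> x) = T x)
                 \<longrightarrow> (\<forall>y\<in>Xb. Tb' y = Tb y))" ..
  have "\<forall>xb\<in>Xb. has_sup Z leZ {T x | x. x \<in> X \<and> leb (\<iota> x) xb}"
  proof
    fix xb assume "xb \<in> Xb"
    hence "is_sup Z leZ {T x | x. x \<in> X \<and> leb (\<iota> x) xb} (Tb xb)"
      using key[OF conjunct1[OF Tb0] conjunct1[OF conjunct2[OF Tb0]]] by blast
    thus "has_sup Z leZ {T x | x. x \<in> X \<and> leb (\<iota> x) xb}" unfolding has_sup_def by blast
  qed
  moreover have "\<forall>Tb. mcp Xb leb Z leZ Tb \<and> (\<forall>x\<in>X. Tb (\<iota> x) = T x)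
              \<longrightarrow> (\<forall>xb\<in>Xb. is_sup Z leZ {T x | x. x \<in> X \<and> leb (\<iota> x) xb} (Tb xb))"
  proof (intro allI impI ballI)
    fix Tb xb assume "mcp Xb leb Z leZ Tb \<and> (\<forall>x\<in>X. Tb (\<iota> x) = T x)" "xb \<in> Xb"
    thus "is_sup Z leZ {T x | x. x \<in> X \<and> leb (\<iota> x) xb} (Tb xb)" using key by blast
  qed
  ultimately show ?thesis by (rule conjI)
qed

lemma uniq_iso:
  fixes Xb1 :: "'b set" and Xb2 :: "'c set"
  assumes "poset X le" "dcompl TYPE('b) X le Xb1 leb1 \<iota>1" "dcompl TYPE('c) X le Xb1 leb1 \<iota>1"
    "dcompl TYPE('b) X le Xb2 leb2 \<iota>2" "dcompl TYPE('c) X le Xb2 leb2 \<iota>2"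
  shows "\<exists>\<phi>. order_iso Xb1 leb1 Xb2 leb2 \<phi> \<and> (\<forall>x\<in>X. \<phi> (\<iota>1 x) = \<iota>2 x)
             \<and> (\<forall>\<psi>. order_iso Xb1 leb1 Xb2 leb2 \<psi> \<and> (\<forall>x\<in>X. \<psi> (\<iota>1 x) = \<iota>2 x)
                    \<longrightarrow> (\<forall>y\<in>Xb1. \<psi> y = \<phi> y))"
proof -
  have d1: "dcpo Xb1 leb1" and m1: "mcp X le Xb1 leb1 \<iota>1" using dcomplD2[OF assms(2)] by auto
  have d2: "dcpo Xb2 leb2" and m2: "mcp X le Xb2 leb2 \<iota>2" using dcomplD2[OF assms(4)] by auto
  have p1: "poset Xb1 leb1" using d1 unfolding dcpo_def by (elim conjE)
  have p2: "poset Xb2 leb2" using d2 unfolding dcpo_def by (elim conjE)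
  from dcomplEx[OF assms(3) d2 m2] obtain \<phi> where ph0: "mcp Xb1 leb1 Xb2 leb2 \<phi> \<and> (\<forall>x\<in>X. \<phi> (\<iota>1 x) = \<iota>2 x) \<and>
           (\<forall>Tb'. mcp Xb1 leb1 Xb2 leb2 Tb' \<and> (\<forall>x\<in>X. Tb' (\<iota>1 x) = \<iota>2 x)
                 \<longrightarrow> (\<forall>y\<in>Xb1. Tb' y = \<phi> y))" ..
  have ph1: "mcp Xb1 leb1 Xb2 leb2 \<phi>" using conjunct1[OF ph0] .
  have ph2: "\<forall>x\<in>X. \<phi> (\<iota>1 x) = \<iota>2 x" using conjunct1[OF conjunct2[OF ph0]] .
  have ph3: "\<forall>Tb'. mcp Xb1 leb1 Xb2 leb2 Tb' \<and> (\<forall>x\<in>X. Tb' (\<iota>1 x) = \<iota>2 x)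
                 \<longrightarrow> (\<forall>y\<in>Xb1. Tb' y = \<phi> y)" using conjunct2[OF conjunct2[OF ph0]] .
  from dcomplEx[OF assms(4) d1 m1] obtain \<chi> where ch0: "mcp Xb2 leb2 Xb1 leb1 \<chi> \<and> (\<forall>x\<in>X. \<chi> (\<iota>2 x) = \<iota>1 x) \<and>
           (\<forall>Tb'. mcp Xb2 leb2 Xb1 leb1 Tb' \<and> (\<forall>x\<in>X. Tb' (\<iota>2 x) = \<iota>1 x)
                 \<longrightarrow> (\<forall>y\<in>Xb2. Tb' y = \<chi> y))" ..
  have ch1: "mcp Xb2 leb2 Xb1 leb1 \<chi>" using conjunct1[OF ch0] .
  have ch2: "\<forall>x\<in>X. \<chi> (\<iota>2 x) = \<iota>1 x" using conjunct1[OF conjunct2[OF ch0]] .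
  from dcomplEx[OF assms(2) d1 m1] obtain I1 where I10: "mcp Xb1 leb1 Xb1 leb1 I1 \<and> (\<forall>x\<in>X. I1 (\<iota>1 x) = \<iota>1 x) \<and>
           (\<forall>Tb'. mcp Xb1 leb1 Xb1 leb1 Tb' \<and> (\<forall>x\<in>X. Tb' (\<iota>1 x) = \<iota>1 x)
                 \<longrightarrow> (\<forall>y\<in>Xb1. Tb' y = I1 y))" ..
  have I1: "\<forall>Tb'. mcp Xb1 leb1 Xb1 leb1 Tb' \<and> (\<forall>x\<in>X. Tb' (\<iota>1 x) = \<iota>1 x)
                 \<longrightarrow> (\<forall>y\<in>Xb1. Tb' y = I1 y)" using conjunct2[OF conjunct2[OF I10]] .
  from dcomplEx[OF assms(5) d2 m2] obtain I2 where I20: "mcp Xb2 leb2 Xb2 leb2 I2 \<and> (\<forall>x\<in>X. I2 (\<iota>2 x) = \<iota>2 x) \<and>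
           (\<forall>Tb'. mcp Xb2 leb2 Xb2 leb2 Tb' \<and> (\<forall>x\<in>X. Tb' (\<iota>2 x) = \<iota>2 x)
                 \<longrightarrow> (\<forall>y\<in>Xb2. Tb' y = I2 y))" ..
  have I2: "\<forall>Tb'. mcp Xb2 leb2 Xb2 leb2 Tb' \<and> (\<forall>x\<in>X. Tb' (\<iota>2 x) = \<iota>2 x)
                 \<longrightarrow> (\<forall>y\<in>Xb2. Tb' y = I2 y)" using conjunct2[OF conjunct2[OF I20]] .
  have c1: "\<chi> (\<phi> y) = y" if y: "y \<in> Xb1" for y
  proof -
    have mc: "mcp Xb1 leb1 Xb1 leb1 (\<chi> \<circ> \<phi>)" by (rule mcp_comp[OF p1 ph1 ch1])
    have "\<forall>x\<in>X. (\<chi> \<circ> \<phi>) (\<iota>1 x) = \<iota>1 x" using ph2 ch2 by simp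
    hence a: "(\<chi> \<circ> \<phi>) y = I1 y" using I1 mc y by blast
    have "\<forall>x\<in>X. (\<lambda>y. y) (\<iota>1 x) = \<iota>1 x" by simp
    hence b: "(\<lambda>y. y) y = I1 y" using I1 mcp_id y by blast
    from a b show ?thesis by (metis comp_apply)
  qed
  have c2: "\<phi> (\<chi> y) = y" if y: "y \<in> Xb2" for y
  proof -
    have mc: "mcp Xb2 leb2 Xb2 leb2 (\<phi> \<circ> \<chi>)" by (rule mcp_comp[OF p2 ch1 ph1])
    have "\<forall>x\<in>X. (\<phi> \<circ> \<chi>) (\<iota>2 x) = \<iota>2 x" using ph2 ch2 by simp
    hence a: "(\<phi> \<circ> \<chi>) y = I2 y" using I2 mc y by blast
    have "\<forall>x\<in>X. (\<lambda>y. y) (\<iota>2 x) = \<iota>2 x" by simp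
    hence b: "(\<lambda>y. y) y = I2 y" using I2 mcp_id y by blast
    from a b show ?thesis by (metis comp_apply)
  qed
  have r1: "\<phi> ` Xb1 \<subseteq> Xb2" using mcpD1[OF ph1] by blast
  have r2: "\<chi> ` Xb2 \<subseteq> Xb1" using mcpD1[OF ch1] by blast
  have iso: "order_iso Xb1 leb1 Xb2 leb2 \<phi>" unfolding order_iso_def
  proof (intro conjI ballI)
    show "bij_betw \<phi> Xb1 Xb2" by (rule bij_betw_byWitness[of Xb1 \<chi> \<phi> Xb2]) (use c1 c2 r1 r2 in auto)
  next
    fix x y assume xy: "x \<in> Xb1" "y \<in> Xb1"
    show "leb1 x y \<longleftrightarrow> leb2 (\<phi> x) (\<phi> y)"
    proof
      assume "leb1 x y" thus "leb2 (\<phi> x) (\<phi> y)" by (rule mcp_mono[OF p1 ph1 xy])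
    next
      assume h: "leb2 (\<phi> x) (\<phi> y)"
      have "\<phi> x \<in> Xb2" "\<phi> y \<in> Xb2" using xy r1 by auto
      hence "leb1 (\<chi> (\<phi> x)) (\<chi> (\<phi> y))" using mcp_mono[OF p2 ch1] h by blast
      thus "leb1 x y" using c1 xy by simp
    qed
  qed
  have un: "\<forall>\<psi>. order_iso Xb1 leb1 Xb2 leb2 \<psi> \<and> (\<forall>x\<in>X. \<psi> (\<iota>1 x) = \<iota>2 x)
                    \<longrightarrow> (\<forall>y\<in>Xb1. \<psi> y = \<phi> y)"
  proof (intro allI impI)
    fix \<psi> assume h: "order_iso Xb1 leb1 Xb2 leb2 \<psi> \<and> (\<forall>x\<in>X. \<psi> (\<iota>1 x) = \<iota>2 x)"
    have "mcp Xb1 leb1 Xb2 leb2 \<psi>" using iso_mcp h by blast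
    thus "\<forall>y\<in>Xb1. \<psi> y = \<phi> y" using ph3 h by blast
  qed
  show ?thesis using iso ph2 un by blast
qed




lemma Y_sub: "A \<in> realY X le \<Longrightarrow> A \<subseteq> X" unfolding realY_def by blast
lemma Y_lower: "A \<in> realY X le \<Longrightarrow> lower_set X le A" using realY_iff by blast
lemma Y_dsup: "A \<in> realY X le \<Longrightarrow> dsup_closed X le A" using realY_iff by blast
lemma lowerD: "lower_set X le A \<Longrightarrow> x \<in> A \<Longrightarrow> y \<in> X \<Longrightarrow> le y x \<Longrightarrow> y \<in> A"
  unfolding lower_set_def by blast

lemma iota_mem: "y \<in> real_iota X le x \<longleftrightarrow> y \<in> X \<and> le y x"
  unfolding real_iota_def down_def by simp

lemma iota_Y: assumes "poset X le" "x \<in> X" shows "real_iota X le x \<in> realY X le"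
proof -
  have "lower_set X le (real_iota X le x)" unfolding lower_set_def
  proof (intro conjI ballI impI)
    show "real_iota X le x \<subseteq> X" by (auto simp: iota_mem)
  next
    fix a b assume h: "a \<in> real_iota X le x" "b \<in> X" "le b a"
    have a: "a \<in> X" "le a x" using h(1) by (auto simp: iota_mem)
    have "le b x" by (rule poset_trans[OF assms(1) h(2) a(1) assms(2) h(3) a(2)])
    thus "b \<in> real_iota X le x" using h(2) by (simp add: iota_mem)
  qed
  moreover have "dsup_closed X le (real_iota X le x)" unfolding real_iota_def by (rule down_dsup[OF assms])
  ultimately show ?thesis using realY_iff by blast
qed

lemma iota_refl: "poset X le \<Longrightarrow> x \<in> X \<Longrightarrow> x \<in> real_iota X le x"
  using poset_refl by (simp add: iota_mem) 

lemma iota_mono: assumes "poset X le" "x \<in> X" "y \<in> X" "le x y"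
  shows "real_iota X le x \<subseteq> real_iota X le y"
proof
  fix z assume "z \<in> real_iota X le x"
  hence z: "z \<in> X" "le z x" by (auto simp: iota_mem)
  have "le z y" by (rule poset_trans[OF assms(1) z(1) assms(2,3) z(2) assms(4)])
  thus "z \<in> real_iota X le y" using z(1) by (simp add: iota_mem)
qed

lemma iota_least: assumes "A \<in> realY X le" "x \<in> A" shows "real_iota X le x \<subseteq> A"
proof
  fix z assume "z \<in> real_iota X le x"
  hence z: "z \<in> X" "le z x" by (auto simp: iota_mem)
  show "z \<in> A" by (rule lowerD[OF Y_lower[OF assms(1)] assms(2) z])
qed

lemma Y_sup: assumes "\<D> \<subseteq> realY X le" shows "is_sup (realY X le) (\<subseteq>) \<D> (hclosure X le (\<Union>\<D>))"
proof -
  have UX: "\<Union>\<D> \<subseteq> X" using assms Y_sub by blast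
  have "hclosure X le (\<Union>\<D>) \<in> realY X le" using realY_iff hcl_lower[OF UX] hcl_dsup[OF UX] by blast
  moreover have "\<forall>a\<in>\<D>. a \<subseteq> hclosure X le (\<Union>\<D>)" using hcl_sub[of "\<Union>\<D>" X le] by blast
  moreover have "\<forall>u\<in>realY X le. (\<forall>a\<in>\<D>. a \<subseteq> u) \<longrightarrow> hclosure X le (\<Union>\<D>) \<subseteq> u"
  proof (intro ballI impI)
    fix u assume u: "u \<in> realY X le" "\<forall>a\<in>\<D>. a \<subseteq> u"
    have "\<Union>\<D> \<subseteq> u" using u(2) by blast
    thus "hclosure X le (\<Union>\<D>) \<subseteq> u" by (rule hcl_least[OF _ Y_lower[OF u(1)] Y_dsup[OF u(1)]])
  qed
  ultimately show ?thesis unfolding is_sup_def by (intro conjI)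
qed

lemma Y_poset: "poset (realY X le) (\<subseteq>)"
  unfolding poset_def by (intro conjI ballI impI) auto

lemma Y_sup_eq: "\<D> \<subseteq> realY X le \<Longrightarrow> is_sup (realY X le) (\<subseteq>) \<D> s \<Longrightarrow> s = hclosure X le (\<Union>\<D>)"
  by (rule sup_unique[OF Y_poset _ Y_sup])

lemma iX_Y: "poset X le \<Longrightarrow> real_iota X le ` X \<subseteq> realY X le"
  by (rule image_subsetI, rule iota_Y)

lemma Xb_sub: "poset X le \<Longrightarrow> realXb X le \<subseteq> realY X le"
  unfolding realXb_def by (rule dcl_subP[OF iX_Y])

lemma Xb_closed: "poset X le \<Longrightarrow> dsup_closed (realY X le) (\<subseteq>) (realXb X le)"
  unfolding realXb_def by (rule dcl_closed[OF iX_Y])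

lemma iota_Xb: "x \<in> X \<Longrightarrow> real_iota X le x \<in> realXb X le"
  unfolding realXb_def by (rule subsetD[OF dcl_sub imageI])

lemma Y_dcpo: "dcpo (realY X le) (\<subseteq>)"
  unfolding dcpo_def
proof (intro conjI allI impI)
  show "poset (realY X le) (\<subseteq>)" by (rule Y_poset)
next
  fix D assume "directed (realY X le) (\<subseteq>) D"
  hence "D \<subseteq> realY X le" by (rule directedD)
  hence "is_sup (realY X le) (\<subseteq>) D (hclosure X le (\<Union>D))" by (rule Y_sup)
  thus "has_sup (realY X le) (\<subseteq>) D" unfolding has_sup_def by (rule exI)
qed

lemma Xb_dcpo: "poset X le \<Longrightarrow> dcpo (realXb X le) (\<subseteq>)"
  by (rule dcpo_sub1[OF Y_dcpo Xb_closed])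

lemma iota_mcp: assumes "poset X le" shows "mcp X le (realXb X le) (\<subseteq>) (real_iota X le)"
proof (rule mcpI)
  fix x assume "x \<in> X" thus "real_iota X le x \<in> realXb X le" by (rule iota_Xb)
next
  fix D s assume h: "directed X le D" "is_sup X le D s"
  have DX: "D \<subseteq> X" by (rule directedD[OF h(1)])
  have sX: "s \<in> X" by (rule is_supD(1)[OF h(2)])
  have "is_sup (realY X le) (\<subseteq>) (real_iota X le ` D) (real_iota X le s)" unfolding is_sup_def
  proof (intro conjI ballI impI)
    show "real_iota X le s \<in> realY X le" by (rule iota_Y[OF assms sX])
  next
    fix a assume "a \<in> real_iota X le ` D"
    then obtain d where d: "d \<in> D" "a = real_iota X le d" by blast
    have "le d s" by (rule is_supD(2)[OF h(2) d(1)])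
    moreover have "d \<in> X" using DX d(1) by blast
    ultimately have "real_iota X le d \<subseteq> real_iota X le s" by (intro iota_mono[OF assms _ sX])
    thus "a \<subseteq> real_iota X le s" using d(2) by simp
  next
    fix u assume u: "u \<in> realY X le" "\<forall>a\<in>real_iota X le ` D. a \<subseteq> u"
    have "D \<subseteq> u"
    proof
      fix d assume d: "d \<in> D"
      have dX: "d \<in> X" using DX d by blast
      have "real_iota X le d \<subseteq> u" using u(2) d by blast
      thus "d \<in> u" using iota_refl[OF assms dX] by blast
    qed
    hence "s \<in> u" by (rule dsup_closedD[OF Y_dsup[OF u(1)] h(1) _ h(2)])
    thus "real_iota X le s \<subseteq> u" by (rule iota_least[OF u(1)])
  qed
  thus "is_sup (realXb X le) (\<subseteq>) (real_iota X le ` D) (real_iota X le s)"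
    by (rule sup_in_sub[OF _ iota_Xb[OF sX] Xb_sub[OF assms]])
qed

lemma dcpoD: "dcpo P le \<Longrightarrow> directed P le D \<Longrightarrow> has_sup P le D"
  unfolding dcpo_def by blast

lemma real_univ:
  fixes Z :: "'z set"
  assumes pX: "poset X le" and dZ: "dcpo Z leZ" and mT: "mcp X le Z leZ T"
  shows "\<exists>Tb. mcp (realXb X le) (\<subseteq>) Z leZ Tb \<and> (\<forall>x\<in>X. Tb (real_iota X le x) = T x) \<and>
           (\<forall>Tb'. mcp (realXb X le) (\<subseteq>) Z leZ Tb' \<and> (\<forall>x\<in>X. Tb' (real_iota X le x) = T x)
                 \<longrightarrow> (\<forall>y\<in>realXb X le. Tb' y = Tb y))"
proof -
  let ?Y = "realY X le" and ?Xb = "realXb X le" and ?i = "real_iota X le"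
  define \<sigma> where "\<sigma> A = (SOME z. is_sup Z leZ (T ` A) z)" for A
  have pZ: "poset Z leZ" using dZ unfolding dcpo_def by (elim conjE)
  have TZ: "T x \<in> Z" if "x \<in> X" for x by (rule mcpD1[OF mT that])
  have Tm: "leZ (T x) (T y)" if "x \<in> X" "y \<in> X" "le x y" for x y by (rule mcp_mono[OF pX mT that])
  have sig: "is_sup Z leZ (T ` A) (\<sigma> A)" if "is_sup Z leZ (T ` A) z" for A z
    unfolding \<sigma>_def by (rule someI[of "is_sup Z leZ (T ` A)", OF that])
  have ub_hcl: "leZ (T x) u" if B: "B \<subseteq> X" "u \<in> Z" "\<forall>b\<in>B. leZ (T b) u" and x: "x \<in> hclosure X le B" for B u x
  proof -
    let ?L = "{x \<in> X. leZ (T x) u}"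
    have "lower_set X le ?L" unfolding lower_set_def
    proof (intro conjI ballI impI)
      show "?L \<subseteq> X" by blast
    next
      fix a b assume h: "a \<in> ?L" "b \<in> X" "le b a"
      have aX: "a \<in> X" and au: "leZ (T a) u" using h(1) by auto
      have "leZ (T b) (T a)" by (rule Tm[OF h(2) aX h(3)])
      hence "leZ (T b) u" by (rule poset_trans[OF pZ TZ[OF h(2)] TZ[OF aX] B(2) _ au])
      thus "b \<in> ?L" using h(2) by blast
    qed
    moreover have "dsup_closed X le ?L" unfolding dsup_closed_def
    proof (intro conjI allI impI)
      show "?L \<subseteq> X" by blast
    next
      fix D s assume h: "directed X le D \<and> D \<subseteq> ?L \<and> is_sup X le D s"
      have h1: "directed X le D" and h2: "D \<subseteq> ?L" and h3: "is_sup X le D s" using h by auto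
      have hs: "is_sup Z leZ (T ` D) (T s)" by (rule mcpD2[OF mT h1 h3])
      have "leZ (T s) u"
      proof (rule is_supD(3)[OF hs B(2)])
        fix d assume "d \<in> T ` D"
        then obtain e where e: "e \<in> D" "d = T e" by blast
        have "e \<in> ?L" using h2 e(1) by (rule subsetD)
        thus "leZ d u" using e(2) by simp
      qed
      moreover have "s \<in> X" by (rule is_supD(1)[OF h3])
      ultimately show "s \<in> ?L" by blast
    qed
    moreover have "B \<subseteq> ?L" using B by blast
    ultimately have "hclosure X le B \<subseteq> ?L" by (intro hcl_least)
    thus ?thesis using x by blast
  qed
  have sup_hcl: "is_sup Z leZ (T ` hclosure X le B) z" if B: "B \<subseteq> X" "is_sup Z leZ (T ` B) z" for B z
    unfolding is_sup_def
  proof (intro conjI ballI impI)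
    show zZ: "z \<in> Z" by (rule is_supD(1)[OF B(2)])
  next
    fix a assume "a \<in> T ` hclosure X le B"
    then obtain x where x: "x \<in> hclosure X le B" "a = T x" by blast
    have "\<forall>b\<in>B. leZ (T b) z" by (rule ballI, rule is_supD(2)[OF B(2)], rule imageI)
    hence "leZ (T x) z" by (intro ub_hcl[OF B(1) is_supD(1)[OF B(2)] _ x(1)])
    thus "leZ a z" using x(2) by simp
  next
    fix u assume u: "u \<in> Z" "\<forall>a\<in>T ` hclosure X le B. leZ a u"
    show "leZ z u"
    proof (rule is_supD(3)[OF B(2) u(1)])
      fix d assume "d \<in> T ` B"
      hence "d \<in> T ` hclosure X le B" using hcl_sub[of B X le] by blast
      thus "leZ d u" by (rule bspec[OF u(2)])
    qed
  qed
  have union_sup: "is_sup Z leZ (T ` \<Union>\<D>) z"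
    if D: "\<forall>A\<in>\<D>. is_sup Z leZ (T ` A) (\<sigma> A)" "\<Union>\<D> \<subseteq> X" "is_sup Z leZ (\<sigma> ` \<D>) z" for \<D> z
    unfolding is_sup_def
  proof (intro conjI ballI impI)
    show zZ: "z \<in> Z" by (rule is_supD(1)[OF D(3)])
  next
    fix a assume "a \<in> T ` \<Union>\<D>"
    then obtain x A where x: "A \<in> \<D>" "x \<in> A" "a = T x" by blast
    have sA: "is_sup Z leZ (T ` A) (\<sigma> A)" by (rule bspec[OF D(1) x(1)])
    have xX: "x \<in> X" using D(2) x(1,2) by blast
    have 1: "leZ (T x) (\<sigma> A)" by (rule is_supD(2)[OF sA imageI[OF x(2)]])
    have 2: "leZ (\<sigma> A) z" by (rule is_supD(2)[OF D(3) imageI[OF x(1)]])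
    have "leZ (T x) z" by (rule poset_trans[OF pZ TZ[OF xX] is_supD(1)[OF sA] is_supD(1)[OF D(3)] 1 2])
    thus "leZ a z" using x(3) by simp
  next
    fix u assume u: "u \<in> Z" "\<forall>a\<in>T ` \<Union>\<D>. leZ a u"
    show "leZ z u"
    proof (rule is_supD(3)[OF D(3) u(1)])
      fix d assume "d \<in> \<sigma> ` \<D>"
      then obtain A where A: "A \<in> \<D>" "d = \<sigma> A" by blast
      have sA: "is_sup Z leZ (T ` A) (\<sigma> A)" by (rule bspec[OF D(1) A(1)])
      have "leZ (\<sigma> A) u"
      proof (rule is_supD(3)[OF sA u(1)])
        fix e assume "e \<in> T ` A"
        hence "e \<in> T ` \<Union>\<D>" using A(1) by blast
        thus "leZ e u" by (rule bspec[OF u(2)])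
      qed
      thus "leZ d u" using A(2) by simp
    qed
  qed
  have sig_mono: "leZ (\<sigma> A) (\<sigma> B)" if "A \<subseteq> B" "is_sup Z leZ (T ` A) (\<sigma> A)" "is_sup Z leZ (T ` B) (\<sigma> B)" for A B
  proof (rule is_supD(3)[OF that(2) is_supD(1)[OF that(3)]])
    fix d assume "d \<in> T ` A"
    hence "d \<in> T ` B" using that(1) by blast
    thus "leZ d (\<sigma> B)" by (rule is_supD(2)[OF that(3)])
  qed
  have step: "\<exists>z. is_sup Z leZ (\<sigma> ` \<D>) z \<and> is_sup Z leZ (T ` hclosure X le (\<Union>\<D>)) z"
    if D: "directed ?Y (\<subseteq>) \<D>" "\<forall>A\<in>\<D>. is_sup Z leZ (T ` A) (\<sigma> A)" for \<D>
  proof -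
    have DY: "\<D> \<subseteq> ?Y" by (rule directedD[OF D(1)])
    have UX: "\<Union>\<D> \<subseteq> X" by (rule Union_least, rule Y_sub, rule subsetD[OF DY])
    have "directed \<D> (\<subseteq>) \<D>" by (rule dir_mono[OF D(1) subset_refl])
    hence "directed Z leZ (\<sigma> ` \<D>)"
    proof (rule directed_image)
      show "\<forall>x\<in>\<D>. \<sigma> x \<in> Z" by (rule ballI, rule is_supD(1), rule bspec[OF D(2)])
    next
      fix A B assume AB: "A \<in> \<D>" "B \<in> \<D>" "A \<subseteq> B"
      show "leZ (\<sigma> A) (\<sigma> B)" by (rule sig_mono[OF AB(3) bspec[OF D(2) AB(1)] bspec[OF D(2) AB(2)]])
    qed
    hence "has_sup Z leZ (\<sigma> ` \<D>)" by (rule dcpoD[OF dZ])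
    then obtain z where z: "is_sup Z leZ (\<sigma> ` \<D>) z" unfolding has_sup_def ..
    have "is_sup Z leZ (T ` \<Union>\<D>) z" by (rule union_sup[OF D(2) UX z])
    hence "is_sup Z leZ (T ` hclosure X le (\<Union>\<D>)) z" by (rule sup_hcl[OF UX])
    thus ?thesis using z by blast
  qed
  have base: "is_sup Z leZ (T ` ?i x) (T x)" if x: "x \<in> X" for x
    unfolding is_sup_def
  proof (intro conjI ballI impI)
    show "T x \<in> Z" by (rule TZ[OF x])
  next
    fix a assume "a \<in> T ` ?i x"
    then obtain y where y: "y \<in> ?i x" "a = T y" by blast
    have yX: "y \<in> X" and yx: "le y x" using y(1) by (auto simp: iota_mem)
    have "leZ (T y) (T x)" by (rule Tm[OF yX x yx])
    thus "leZ a (T x)" using y(2) by simp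
  next
    fix u assume u: "u \<in> Z" "\<forall>a\<in>T ` ?i x. leZ a u"
    have "x \<in> ?i x" by (rule iota_refl[OF pX x])
    thus "leZ (T x) u" by (rule bspec[OF u(2) imageI])
  qed
  have iXY: "?i ` X \<subseteq> ?Y" by (rule iX_Y[OF pX])
  have W: "is_sup Z leZ (T ` A) (\<sigma> A)" if A: "A \<in> ?Xb" for A
  proof (rule dcl_induct[OF iXY, where Q = "\<lambda>A. is_sup Z leZ (T ` A) (\<sigma> A)"])
    fix a assume "a \<in> ?i ` X"
    then obtain x where x: "x \<in> X" "a = ?i x" by blast
    show "is_sup Z leZ (T ` a) (\<sigma> a)" using sig[OF base[OF x(1)]] x(2) by simp
  next
    fix \<D> s assume h: "directed ?Y (\<subseteq>) \<D>" "\<D> \<subseteq> dclosure ?Y (\<subseteq>) (?i ` X)"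
      "\<forall>d\<in>\<D>. is_sup Z leZ (T ` d) (\<sigma> d)" "is_sup ?Y (\<subseteq>) \<D> s"
    have "s = hclosure X le (\<Union>\<D>)" by (rule Y_sup_eq[OF directedD[OF h(1)] h(4)])
    moreover from step[OF h(1) h(3)] obtain z where
      z: "is_sup Z leZ (\<sigma> ` \<D>) z \<and> is_sup Z leZ (T ` hclosure X le (\<Union>\<D>)) z" ..
    ultimately have "is_sup Z leZ (T ` s) z" by simp
    thus "is_sup Z leZ (T ` s) (\<sigma> s)" by (rule sig)
  next
    show "A \<in> dclosure ?Y (\<subseteq>) (?i ` X)" using A unfolding realXb_def .
  qed
  have ext: "\<sigma> (?i x) = T x" if x: "x \<in> X" for x
    by (rule sup_unique[OF pZ W[OF iota_Xb[OF x]] base[OF x]])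
  have XbY: "?Xb \<subseteq> ?Y" by (rule Xb_sub[OF pX])
  have pXb: "poset ?Xb (\<subseteq>)" using Xb_dcpo[OF pX] unfolding dcpo_def by (elim conjE)
  have mS: "mcp ?Xb (\<subseteq>) Z leZ \<sigma>"
  proof (rule mcpI)
    fix A assume "A \<in> ?Xb" thus "\<sigma> A \<in> Z" by (rule is_supD(1)[OF W])
  next
    fix \<D> S assume h: "directed ?Xb (\<subseteq>) \<D>" "is_sup ?Xb (\<subseteq>) \<D> S"
    have DXb: "\<D> \<subseteq> ?Xb" by (rule directedD[OF h(1)])
    have dY: "directed ?Y (\<subseteq>) \<D>" by (rule dir_mono2[OF h(1) XbY])
    have DY: "\<D> \<subseteq> ?Y" using DXb XbY by blast
    let ?S' = "hclosure X le (\<Union>\<D>)"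
    have sY: "is_sup ?Y (\<subseteq>) \<D> ?S'" by (rule Y_sup[OF DY])
    have S'Xb: "?S' \<in> ?Xb" by (rule dsup_closedD[OF Xb_closed[OF pX] dY DXb sY])
    have "is_sup ?Xb (\<subseteq>) \<D> ?S'" by (rule sup_in_sub[OF sY S'Xb XbY])
    hence SS: "S = ?S'" by (rule sup_unique[OF pXb h(2)])
    have "\<forall>A\<in>\<D>. is_sup Z leZ (T ` A) (\<sigma> A)" by (rule ballI, rule W, rule subsetD[OF DXb])
    from step[OF dY this] obtain z where z0: "is_sup Z leZ (\<sigma> ` \<D>) z \<and> is_sup Z leZ (T ` ?S') z" ..
    have z: "is_sup Z leZ (\<sigma> ` \<D>) z" "is_sup Z leZ (T ` ?S') z" using z0 by auto
    have "\<sigma> S = z" using sup_unique[OF pZ W[OF S'Xb] z(2)] SS by simp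
    thus "is_sup Z leZ (\<sigma> ` \<D>) (\<sigma> S)" using z(1) by simp
  qed
  have uniq: "\<forall>y\<in>?Xb. Tb' y = \<sigma> y"
    if Tb': "mcp ?Xb (\<subseteq>) Z leZ Tb'" "\<forall>x\<in>X. Tb' (?i x) = T x" for Tb'
  proof
    fix y assume y: "y \<in> ?Xb"
    show "Tb' y = \<sigma> y"
    proof (rule dcl_induct[OF iXY, where Q = "\<lambda>A. Tb' A = \<sigma> A"])
      fix a assume "a \<in> ?i ` X"
      then obtain x where x: "x \<in> X" "a = ?i x" by blast
      show "Tb' a = \<sigma> a" using Tb'(2) ext[OF x(1)] x by simp
    next
      fix \<D> s assume h: "directed ?Y (\<subseteq>) \<D>" "\<D> \<subseteq> dclosure ?Y (\<subseteq>) (?i ` X)"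
        "\<forall>d\<in>\<D>. Tb' d = \<sigma> d" "is_sup ?Y (\<subseteq>) \<D> s"
      have DXb: "\<D> \<subseteq> ?Xb" using h(2) unfolding realXb_def .
      have sXb: "s \<in> ?Xb" by (rule dsup_closedD[OF Xb_closed[OF pX] h(1) DXb h(4)])
      have sup: "is_sup ?Xb (\<subseteq>) \<D> s" by (rule sup_in_sub[OF h(4) sXb XbY])
      have dXb: "directed ?Xb (\<subseteq>) \<D>" by (rule dir_mono[OF h(1) DXb])
      have 1: "is_sup Z leZ (Tb' ` \<D>) (Tb' s)" by (rule mcpD2[OF Tb'(1) dXb sup])
      have 2: "is_sup Z leZ (\<sigma> ` \<D>) (\<sigma> s)" by (rule mcpD2[OF mS dXb sup])
      have "Tb' ` \<D> = \<sigma> ` \<D>" using h(3) by (intro image_cong) auto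
      with 1 have "is_sup Z leZ (\<sigma> ` \<D>) (Tb' s)" by simp
      thus "Tb' s = \<sigma> s" by (rule sup_unique[OF pZ _ 2])
    next
      show "y \<in> dclosure ?Y (\<subseteq>) (?i ` X)" using y unfolding realXb_def .
    qed
  qed
  have "mcp ?Xb (\<subseteq>) Z leZ \<sigma> \<and> (\<forall>x\<in>X. \<sigma> (?i x) = T x) \<and>
           (\<forall>Tb'. mcp ?Xb (\<subseteq>) Z leZ Tb' \<and> (\<forall>x\<in>X. Tb' (?i x) = T x)
                 \<longrightarrow> (\<forall>y\<in>?Xb. Tb' y = \<sigma> y))"
  proof (intro conjI ballI allI impI)
    show "mcp ?Xb (\<subseteq>) Z leZ \<sigma>" by (rule mS)
  next
    fix x assume "x \<in> X" thus "\<sigma> (?i x) = T x" by (rule ext)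
  next
    fix Tb' y assume h: "mcp ?Xb (\<subseteq>) Z leZ Tb' \<and> (\<forall>x\<in>X. Tb' (?i x) = T x)" "y \<in> ?Xb"
    show "Tb' y = \<sigma> y" by (rule bspec[OF uniq[OF conjunct1[OF h(1)] conjunct2[OF h(1)]] h(2)])
  qed
  thus ?thesis by (rule exI[where x=\<sigma>])
qed

lemma real_tips:
  assumes pX: "poset X le" and AY: "A \<in> realY X le"
  shows "(A \<in> realXb X le \<longleftrightarrow> has_tip (realY X le) (\<subseteq>) (real_iota X le ` A))
      \<and> (A \<in> realXb X le \<longrightarrow> is_tip (realY X le) (\<subseteq>) (real_iota X le ` A) A)"
proof -
  let ?Y = "realY X le" and ?Xb = "realXb X le" and ?i = "real_iota X le"
  have AX: "A \<subseteq> X" by (rule Y_sub[OF AY])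
  have iXY: "?i ` X \<subseteq> ?Y" by (rule iX_Y[OF pX])
  have iAY: "?i ` A \<subseteq> ?Y" using iXY AX by blast
  have ub: "B \<subseteq> A" if B: "B \<in> dclosure ?Y (\<subseteq>) (?i ` A)" for B
  proof -
    let ?N = "{B \<in> ?Y. B \<subseteq> A}"
    have "dsup_closed ?Y (\<subseteq>) ?N" unfolding dsup_closed_def
    proof (intro conjI allI impI)
      show "?N \<subseteq> ?Y" by blast
    next
      fix D s assume h: "directed ?Y (\<subseteq>) D \<and> D \<subseteq> ?N \<and> is_sup ?Y (\<subseteq>) D s"
      have h2: "D \<subseteq> ?N" and h3: "is_sup ?Y (\<subseteq>) D s" using h by auto
      have "s \<subseteq> A"
      proof (rule is_supD(3)[OF h3 AY])
        fix d assume "d \<in> D" thus "d \<subseteq> A" using h2 by blast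
      qed
      moreover have "s \<in> ?Y" by (rule is_supD(1)[OF h3])
      ultimately show "s \<in> ?N" by blast
    qed
    moreover have "?i ` A \<subseteq> ?N"
    proof
      fix b assume "b \<in> ?i ` A"
      then obtain a where a: "a \<in> A" "b = ?i a" by blast
      have "?i a \<in> ?Y" by (rule iota_Y[OF pX subsetD[OF AX a(1)]])
      moreover have "?i a \<subseteq> A" by (rule iota_least[OF AY a(1)])
      ultimately show "b \<in> ?N" using a(2) by blast
    qed
    ultimately have "dclosure ?Y (\<subseteq>) (?i ` A) \<subseteq> ?N" by (intro dcl_least)
    thus ?thesis using B by blast
  qed
  have tip_of: "is_tip ?Y (\<subseteq>) (?i ` A) A" if "A \<in> dclosure ?Y (\<subseteq>) (?i ` A)"
    unfolding is_tip_def using that ub by blast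
  have from_tip: "A \<in> dclosure ?Y (\<subseteq>) (?i ` A)" if ht: "has_tip ?Y (\<subseteq>) (?i ` A)"
  proof -
    obtain t where t: "t \<in> dclosure ?Y (\<subseteq>) (?i ` A)" "\<forall>y\<in>dclosure ?Y (\<subseteq>) (?i ` A). y \<subseteq> t"
      using ht unfolding has_tip_def is_tip_def by blast
    have "t \<subseteq> A" by (rule ub[OF t(1)])
    moreover have "A \<subseteq> t"
    proof
      fix a assume a: "a \<in> A"
      have "?i a \<in> dclosure ?Y (\<subseteq>) (?i ` A)" using dcl_sub[of "?i ` A" ?Y "(\<subseteq>)"] a by blast
      hence "?i a \<subseteq> t" using t(2) by blast
      moreover have "a \<in> ?i a" by (rule iota_refl[OF pX subsetD[OF AX a]])
      ultimately show "a \<in> t" by blast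
    qed
    ultimately have "t = A" by blast
    thus ?thesis using t(1) by simp
  qed
  have sub: "dclosure ?Y (\<subseteq>) (?i ` A) \<subseteq> ?Xb"
    unfolding realXb_def by (rule dcl_mono[OF _ iXY]) (use AX in blast)
  have to_dcl: "A \<in> dclosure ?Y (\<subseteq>) (?i ` A)" if AXb: "A \<in> ?Xb"
  proof (rule dcl_induct[OF iXY, where Q = "\<lambda>B. B \<in> dclosure ?Y (\<subseteq>) (?i ` B)"])
    fix a assume "a \<in> ?i ` X"
    then obtain x where x: "x \<in> X" "a = ?i x" by blast
    have "x \<in> ?i x" by (rule iota_refl[OF pX x(1)])
    hence "a \<in> ?i ` a" using x(2) by blast
    thus "a \<in> dclosure ?Y (\<subseteq>) (?i ` a)" using dcl_sub[of "?i ` a" ?Y "(\<subseteq>)"] by blast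
  next
    fix D s assume h: "directed ?Y (\<subseteq>) D" "D \<subseteq> dclosure ?Y (\<subseteq>) (?i ` X)"
      "\<forall>d\<in>D. d \<in> dclosure ?Y (\<subseteq>) (?i ` d)" "is_sup ?Y (\<subseteq>) D s"
    have sY: "s \<in> ?Y" by (rule is_supD(1)[OF h(4)])
    have sX: "s \<subseteq> X" by (rule Y_sub[OF sY])
    have isY: "?i ` s \<subseteq> ?Y" using iXY sX by blast
    have "D \<subseteq> dclosure ?Y (\<subseteq>) (?i ` s)"
    proof
      fix d assume d: "d \<in> D"
      have "d \<subseteq> s" by (rule is_supD(2)[OF h(4) d])
      hence "?i ` d \<subseteq> ?i ` s" by blast
      hence "dclosure ?Y (\<subseteq>) (?i ` d) \<subseteq> dclosure ?Y (\<subseteq>) (?i ` s)" by (rule dcl_mono[OF _ isY])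
      moreover have "d \<in> dclosure ?Y (\<subseteq>) (?i ` d)" by (rule bspec[OF h(3) d])
      ultimately show "d \<in> dclosure ?Y (\<subseteq>) (?i ` s)" by blast
    qed
    thus "s \<in> dclosure ?Y (\<subseteq>) (?i ` s)" by (rule dsup_closedD[OF dcl_closed[OF isY] h(1) _ h(4)])
  next
    show "A \<in> dclosure ?Y (\<subseteq>) (?i ` X)" using AXb unfolding realXb_def .
  qed
  have "A \<in> ?Xb \<longleftrightarrow> has_tip ?Y (\<subseteq>) (?i ` A)"
  proof
    assume "A \<in> ?Xb"
    hence "is_tip ?Y (\<subseteq>) (?i ` A) A" by (rule tip_of[OF to_dcl])
    thus "has_tip ?Y (\<subseteq>) (?i ` A)" unfolding has_tip_def by (rule exI)
  next
    assume "has_tip ?Y (\<subseteq>) (?i ` A)"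
    hence "A \<in> dclosure ?Y (\<subseteq>) (?i ` A)" by (rule from_tip)
    thus "A \<in> ?Xb" using sub by blast
  qed
  moreover have "A \<in> ?Xb \<longrightarrow> is_tip ?Y (\<subseteq>) (?i ` A) A"
  proof
    assume "A \<in> ?Xb" thus "is_tip ?Y (\<subseteq>) (?i ` A) A" by (rule tip_of[OF to_dcl])
  qed
  ultimately show ?thesis by (rule conjI)
qed

lemma real_dcompl:
  assumes pX: "poset X le"
  shows "dcompl TYPE('z) X le (realXb X le) (\<subseteq>) (real_iota X le)"
  unfolding dcompl_def
proof (intro conjI allI impI)
  show "dcpo (realXb X le) (\<subseteq>)" by (rule Xb_dcpo[OF pX])
next
  show "mcp X le (realXb X le) (\<subseteq>) (real_iota X le)" by (rule iota_mcp[OF pX])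
next
  fix Z :: "'z set" and leZ T assume h: "dcpo Z leZ \<and> mcp X le Z leZ T"
  show "\<exists>Tb. mcp (realXb X le) (\<subseteq>) Z leZ Tb \<and> (\<forall>x\<in>X. Tb (real_iota X le x) = T x) \<and>
           (\<forall>Tb'. mcp (realXb X le) (\<subseteq>) Z leZ Tb' \<and> (\<forall>x\<in>X. Tb' (real_iota X le x) = T x)
                 \<longrightarrow> (\<forall>y\<in>realXb X le. Tb' y = Tb y))"
    by (rule real_univ[OF pX conjunct1[OF h] conjunct2[OF h]])
qed


theorem mainTheorem1:
  fixes X :: "'a set" and le :: "'a \<Rightarrow> 'a \<Rightarrow> bool"
  assumes "poset X le"
  shows
    \<comment> \<open>existence, via the explicit realization (iii)\<close>
    "dcompl TYPE('z) X le (realXb X le) (\<subseteq>) (real_iota X le)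
   \<and> (\<forall>A\<in>realY X le.
        (A \<in> realXb X le \<longleftrightarrow> has_tip (realY X le) (\<subseteq>) (real_iota X le ` A))
      \<and> (A \<in> realXb X le \<longrightarrow> is_tip (realY X le) (\<subseteq>) (real_iota X le ` A) A))
    \<comment> \<open>uniqueness up to unique isomorphism\<close>
   \<and> (\<forall>(Xb1::'b set) leb1 \<iota>1 (Xb2::'c set) leb2 \<iota>2.
        dcompl TYPE('b) X le Xb1 leb1 \<iota>1 \<and> dcompl TYPE('c) X le Xb1 leb1 \<iota>1
      \<and> dcompl TYPE('b) X le Xb2 leb2 \<iota>2 \<and> dcompl TYPE('c) X le Xb2 leb2 \<iota>2
      \<longrightarrow> (\<exists>\<phi>. order_iso Xb1 leb1 Xb2 leb2 \<phi> \<and> (\<forall>x\<in>X. \<phi> (\<iota>1 x) = \<iota>2 x)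
             \<and> (\<forall>\<psi>. order_iso Xb1 leb1 Xb2 leb2 \<psi> \<and> (\<forall>x\<in>X. \<psi> (\<iota>1 x) = \<iota>2 x)
                    \<longrightarrow> (\<forall>y\<in>Xb1. \<psi> y = \<phi> y))))
    \<comment> \<open>(i)\<close>
   \<and> (\<forall>(Xb::'d set) leb \<iota>.
        dcompl TYPE('d) X le Xb leb \<iota> \<and> dcompl TYPE('a set set) X le Xb leb \<iota>
      \<longrightarrow> (\<forall>x\<in>Xb. is_tip Xb leb (\<iota> ` X \<inter> down Xb leb {x}) x))
    \<comment> \<open>(ii)\<close>
   \<and> (\<forall>(Xb::'d set) leb \<iota> (Z::'z set) leZ T.
        dcompl TYPE('d) X le Xb leb \<iota> \<and> dcompl TYPE('a set set) X le Xb leb \<iota>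
      \<and> dcompl TYPE('z) X le Xb leb \<iota> \<and> dcpo Z leZ \<and> mcp X le Z leZ T
      \<longrightarrow> (\<forall>xb\<in>Xb. has_sup Z leZ {T x | x. x \<in> X \<and> leb (\<iota> x) xb})
        \<and> (\<forall>Tb. mcp Xb leb Z leZ Tb \<and> (\<forall>x\<in>X. Tb (\<iota> x) = T x)
              \<longrightarrow> (\<forall>xb\<in>Xb. is_sup Z leZ {T x | x. x \<in> X \<and> leb (\<iota> x) xb} (Tb xb))))"
  proof -
  have c1: "dcompl TYPE('z) X le (realXb X le) (\<subseteq>) (real_iota X le)" by (rule real_dcompl[OF assms])
  have c2: "\<forall>A\<in>realY X le.
        (A \<in> realXb X le \<longleftrightarrow> has_tip (realY X le) (\<subseteq>) (real_iota X le ` A))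
      \<and> (A \<in> realXb X le \<longrightarrow> is_tip (realY X le) (\<subseteq>) (real_iota X le ` A) A)"
    by (rule ballI, rule real_tips[OF assms])
  have c3: "\<forall>(Xb1::'b set) leb1 \<iota>1 (Xb2::'c set) leb2 \<iota>2.
        dcompl TYPE('b) X le Xb1 leb1 \<iota>1 \<and> dcompl TYPE('c) X le Xb1 leb1 \<iota>1
      \<and> dcompl TYPE('b) X le Xb2 leb2 \<iota>2 \<and> dcompl TYPE('c) X le Xb2 leb2 \<iota>2
      \<longrightarrow> (\<exists>\<phi>. order_iso Xb1 leb1 Xb2 leb2 \<phi> \<and> (\<forall>x\<in>X. \<phi> (\<iota>1 x) = \<iota>2 x)
             \<and> (\<forall>\<psi>. order_iso Xb1 leb1 Xb2 leb2 \<psi> \<and> (\<forall>x\<in>X. \<psi> (\<iota>1 x) = \<iota>2 x)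
                    \<longrightarrow> (\<forall>y\<in>Xb1. \<psi> y = \<phi> y)))"
  proof (intro allI impI)
    fix Xb1 :: "'b set" and leb1 \<iota>1 and Xb2 :: "'c set" and leb2 \<iota>2
    assume h: "dcompl TYPE('b) X le Xb1 leb1 \<iota>1 \<and> dcompl TYPE('c) X le Xb1 leb1 \<iota>1
      \<and> dcompl TYPE('b) X le Xb2 leb2 \<iota>2 \<and> dcompl TYPE('c) X le Xb2 leb2 \<iota>2"
    have h1: "dcompl TYPE('b) X le Xb1 leb1 \<iota>1" and h2: "dcompl TYPE('c) X le Xb1 leb1 \<iota>1"
      and h3: "dcompl TYPE('b) X le Xb2 leb2 \<iota>2" and h4: "dcompl TYPE('c) X le Xb2 leb2 \<iota>2"
      using h by auto
    show "\<exists>\<phi>. order_iso Xb1 leb1 Xb2 leb2 \<phi> \<and> (\<forall>x\<in>X. \<phi> (\<iota>1 x) = \<iota>2 x)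
             \<and> (\<forall>\<psi>. order_iso Xb1 leb1 Xb2 leb2 \<psi> \<and> (\<forall>x\<in>X. \<psi> (\<iota>1 x) = \<iota>2 x)
                    \<longrightarrow> (\<forall>y\<in>Xb1. \<psi> y = \<phi> y))"
      by (rule uniq_iso[OF assms h1 h2 h3 h4])
  qed
  have c4: "\<forall>(Xb::'d set) leb \<iota>.
        dcompl TYPE('d) X le Xb leb \<iota> \<and> dcompl TYPE('a set set) X le Xb leb \<iota>
      \<longrightarrow> (\<forall>x\<in>Xb. is_tip Xb leb (\<iota> ` X \<inter> down Xb leb {x}) x)"
  proof (intro allI impI ballI)
    fix Xb :: "'d set" and leb \<iota> x
    assume h: "dcompl TYPE('d) X le Xb leb \<iota> \<and> dcompl TYPE('a set set) X le Xb leb \<iota>" and x: "x \<in> Xb"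
    show "is_tip Xb leb (\<iota> ` X \<inter> down Xb leb {x}) x" by (rule tip_lemma[OF assms conjunct1[OF h] x])
  qed
  have c5: "\<forall>(Xb::'d set) leb \<iota> (Z::'z set) leZ T.
        dcompl TYPE('d) X le Xb leb \<iota> \<and> dcompl TYPE('a set set) X le Xb leb \<iota>
      \<and> dcompl TYPE('z) X le Xb leb \<iota> \<and> dcpo Z leZ \<and> mcp X le Z leZ T
      \<longrightarrow> (\<forall>xb\<in>Xb. has_sup Z leZ {T x | x. x \<in> X \<and> leb (\<iota> x) xb})
        \<and> (\<forall>Tb. mcp Xb leb Z leZ Tb \<and> (\<forall>x\<in>X. Tb (\<iota> x) = T x)
              \<longrightarrow> (\<forall>xb\<in>Xb. is_sup Z leZ {T x | x. x \<in> X \<and> leb (\<iota> x) xb} (Tb xb)))"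
  proof (intro allI impI)
    fix Xb :: "'d set" and leb \<iota> and Z :: "'z set" and leZ T
    assume h: "dcompl TYPE('d) X le Xb leb \<iota> \<and> dcompl TYPE('a set set) X le Xb leb \<iota>
      \<and> dcompl TYPE('z) X le Xb leb \<iota> \<and> dcpo Z leZ \<and> mcp X le Z leZ T"
    have h1: "dcompl TYPE('d) X le Xb leb \<iota>" and h3: "dcompl TYPE('z) X le Xb leb \<iota>"
      and h4: "dcpo Z leZ" and h5: "mcp X le Z leZ T"
      using h by auto
    show "(\<forall>xb\<in>Xb. has_sup Z leZ {T x | x. x \<in> X \<and> leb (\<iota> x) xb})
        \<and> (\<forall>Tb. mcp Xb leb Z leZ Tb \<and> (\<forall>x\<in>X. Tb (\<iota> x) = T x)
              \<longrightarrow> (\<forall>xb\<in>Xb. is_sup Z leZ {T x | x. x \<in> X \<and> leb (\<iota> x) xb} (Tb xb)))"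
      by (rule part_ii[OF assms h1 h3 h4 h5])
  qed
  show ?thesis by (rule conjI[OF c1 conjI[OF c2 conjI[OF c3 conjI[OF c4 c5]]]])
qed

end
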